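(* There is no simple complex abelian surface $A$ with $\mathfrak{d}_A=3$.
   Context: If $A$ is a complex abelian surface with period matrix $(\tau\ \ I_2)$, $\tau=(\tau_{ij})\in M_2(\mathbb{C})$, $\det\operatorname{Im}\tau\ne0$ (i.e. $A=\mathbb{C}^2/\Lambda$ with $\Lambda$ generated by the columns), then $\mathfrak{d}_A=[\mathbb{Q}(\{\tau_{ij}\}):\mathbb{Q}]$; this does not depend on the choice of such period matrix. *)

theory Defs
  imports "HOL-Analysis.Analysis"
begin

text \<open>A period matrix (tau I_2): tau is a 2x2 complex matrix with det Im tau nonzero.
  The lattice is generated over Z by the two columns of tau and the two standard basis vectors.\<close>

definition period_lattice :: "complex^2^2 \<Rightarrow> (complex^2) set" where
  "period_lattice \<tau> =
     {(\<chi> i. (\<Sum>j\<in>UNIV. of_int (a j) * \<tau>$i$j) + of_int (b i)) | a b :: 2 \<Rightarrow> int. True}"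

text \<open>Riemann form: a real bilinear alternating form E on C^2, integral on the lattice,
  with E(ix,iy) = E(x,y) and E(ix,x) > 0 for x nonzero (i.e. H(x,y) = E(ix,y) + i E(x,y) is a
  positive definite Hermitian form).  The torus is an abelian surface iff such a form exists.\<close>

definition is_riemann_form :: "complex^2^2 \<Rightarrow> (complex^2 \<Rightarrow> complex^2 \<Rightarrow> real) \<Rightarrow> bool" where
  "is_riemann_form \<tau> E \<longleftrightarrow>
     bilinear E \<and>
     (\<forall>x y. E x y = - E y x) \<and>
     (\<forall>x\<in>period_lattice \<tau>. \<forall>y\<in>period_lattice \<tau>. E x y \<in> \<int>) \<and>
     (\<forall>x y. E (\<i> *s x) (\<i> *s y) = E x y) \<and>
     (\<forall>x. x \<noteq> 0 \<longrightarrow> E (\<i> *s x) x > 0)"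

definition is_abelian_surface :: "complex^2^2 \<Rightarrow> bool" where
  "is_abelian_surface \<tau> \<longleftrightarrow>
     det (\<chi> i j. Im (\<tau>$i$j)) \<noteq> 0 \<and> (\<exists>E. is_riemann_form \<tau> E)"

text \<open>Simple: no complex subtorus of dimension 1, i.e. there is no complex line
  C w (w nonzero) containing two R-linearly independent lattice vectors.\<close>

definition is_simple_surface :: "complex^2^2 \<Rightarrow> bool" where
  "is_simple_surface \<tau> \<longleftrightarrow>
     \<not> (\<exists>w u v. w \<noteq> 0 \<and> u \<in> period_lattice \<tau> \<and> v \<in> period_lattice \<tau> \<and>
           (\<exists>c. u = c *s w) \<and> (\<exists>d. v = d *s w) \<and>
           (\<forall>r s :: real. r *\<^sub>R u + s *\<^sub>R v = 0 \<longrightarrow> r = 0 \<and> s = 0))"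

definition is_subfield_C :: "complex set \<Rightarrow> bool" where
  "is_subfield_C F \<longleftrightarrow> 0 \<in> F \<and> 1 \<in> F \<and>
     (\<forall>x\<in>F. \<forall>y\<in>F. x + y \<in> F \<and> x * y \<in> F) \<and>
     (\<forall>x\<in>F. - x \<in> F \<and> inverse x \<in> F)"

definition gen_field :: "complex set \<Rightarrow> complex set" where
  "gen_field S = \<Inter> {F. is_subfield_C F \<and> S \<subseteq> F}"

definition Q_degree_eq :: "complex set \<Rightarrow> nat \<Rightarrow> bool" where
  "Q_degree_eq F n \<longleftrightarrow> (\<exists>b :: nat \<Rightarrow> complex.
     (\<forall>q :: nat \<Rightarrow> rat. (\<Sum>i<n. of_rat (q i) * b i) = 0 \<longrightarrow> (\<forall>i<n. q i = 0)) \<and>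
     F = {\<Sum>i<n. of_rat (q i) * b i | q :: nat \<Rightarrow> rat. True})"

end

theory Submission
  imports Defs
begin


lemma sf_0: "is_subfield_C F \<Longrightarrow> 0 \<in> F" by (simp add: is_subfield_C_def)
lemma sf_1: "is_subfield_C F \<Longrightarrow> 1 \<in> F" by (simp add: is_subfield_C_def)
lemma sf_add: "is_subfield_C F \<Longrightarrow> x \<in> F \<Longrightarrow> y \<in> F \<Longrightarrow> x + y \<in> F" by (simp add: is_subfield_C_def)
lemma sf_mult: "is_subfield_C F \<Longrightarrow> x \<in> F \<Longrightarrow> y \<in> F \<Longrightarrow> x * y \<in> F" by (simp add: is_subfield_C_def)
lemma sf_uminus: "is_subfield_C F \<Longrightarrow> x \<in> F \<Longrightarrow> - x \<in> F" by (simp add: is_subfield_C_def)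
lemma sf_inverse: "is_subfield_C F \<Longrightarrow> x \<in> F \<Longrightarrow> inverse x \<in> F" by (simp add: is_subfield_C_def)
lemma sf_diff: "is_subfield_C F \<Longrightarrow> x \<in> F \<Longrightarrow> y \<in> F \<Longrightarrow> x - y \<in> F"
  using sf_add sf_uminus by (metis diff_conv_add_uminus)
lemma sf_divide: "is_subfield_C F \<Longrightarrow> x \<in> F \<Longrightarrow> y \<in> F \<Longrightarrow> x / y \<in> F"
  using sf_mult sf_inverse by (metis divide_inverse)
lemma sf_power: "is_subfield_C F \<Longrightarrow> x \<in> F \<Longrightarrow> x ^ n \<in> F"
  by (induction n) (auto intro: sf_1 sf_mult)
lemma sf_sum: "is_subfield_C F \<Longrightarrow> (\<And>j. j \<in> J \<Longrightarrow> f j \<in> F) \<Longrightarrow> sum f J \<in> F"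
  by (induction J rule: infinite_finite_induct) (auto intro: sf_0 sf_add)

lemma sf_of_nat: "is_subfield_C F \<Longrightarrow> of_nat n \<in> F"
  by (induction n) (auto intro: sf_0 sf_1 sf_add)
lemma sf_of_int: "is_subfield_C F \<Longrightarrow> of_int n \<in> F"
proof (cases "n \<ge> 0")
  case True
  assume F: "is_subfield_C F"
  then have "of_int (int (nat n)) \<in> F" using sf_of_nat[OF F] by (metis of_int_of_nat_eq)
  then show ?thesis using True by simp
next
  case False
  assume F: "is_subfield_C F"
  then have "- of_int (int (nat (- n))) \<in> F" using sf_of_nat[OF F] sf_uminus[OF F] by (metis of_int_of_nat_eq)
  then show ?thesis using False by simp
qed
lemma sf_rats: "is_subfield_C F \<Longrightarrow> x \<in> \<rat> \<Longrightarrow> x \<in> F"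
  by (auto elim!: Rats_cases' intro!: sf_divide sf_of_int)

lemma rats_subfield: "is_subfield_C \<rat>"
  unfolding is_subfield_C_def by auto

lemma gen_field_subfield: "is_subfield_C (gen_field S)"
  unfolding gen_field_def is_subfield_C_def by auto
lemma gen_field_sup: "S \<subseteq> gen_field S"
  unfolding gen_field_def by auto

lemma hom_sys:
  assumes F: "is_subfield_C F"
  shows "finite I \<Longrightarrow> finite J \<Longrightarrow> card I < card J \<Longrightarrow> (\<forall>r\<in>I. \<forall>j\<in>J. A r j \<in> F) \<Longrightarrow>
    \<exists>y. (\<forall>j\<in>J. y j \<in> F) \<and> (\<exists>j\<in>J. y j \<noteq> 0) \<and> (\<forall>r\<in>I. (\<Sum>j\<in>J. A r j * y j) = 0)"
proof (induction I arbitrary: J A rule: finite_induct)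
  case empty
  then obtain j0 where "j0 \<in> J" by fastforce
  then show ?case
    by (intro exI[of _ "\<lambda>j. if j = j0 then 1 else 0"]) (auto intro: sf_0[OF F] sf_1[OF F])
next
  case (insert r0 I)
  show ?case
  proof (cases "\<forall>j\<in>J. A r0 j = 0")
    case True
    have "card I < card J" using insert by simp
    then obtain y where y: "\<forall>j\<in>J. y j \<in> F" "\<exists>j\<in>J. y j \<noteq> 0" "\<forall>r\<in>I. (\<Sum>j\<in>J. A r j * y j) = 0"
      using insert.IH[of J A] insert.prems by auto
    then show ?thesis using True by (intro exI[of _ y]) auto
  next
    case False
    then obtain j0 where j0: "j0 \<in> J" "A r0 j0 \<noteq> 0" by auto
    define J' where "J' = J - {j0}"
    define B where "B r j = A r0 j0 * A r j - A r j0 * A r0 j" for r j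
    have cJ: "card I < card J'" using insert j0 unfolding J'_def by auto
    have BF: "\<forall>r\<in>I. \<forall>j\<in>J'. B r j \<in> F" using insert.prems(3) j0 unfolding B_def J'_def
      by (auto intro!: sf_diff[OF F] sf_mult[OF F])
    obtain y where y: "\<forall>j\<in>J'. y j \<in> F" "\<exists>j\<in>J'. y j \<noteq> 0" "\<forall>r\<in>I. (\<Sum>j\<in>J'. B r j * y j) = 0"
      using insert.IH[OF _ cJ BF] insert.prems(1) unfolding J'_def by auto
    define y' where "y' j = (if j = j0 then - (\<Sum>j\<in>J'. A r0 j * y j) / A r0 j0 else y j)" for j
    have fin: "finite J'" using insert unfolding J'_def by auto
    have j0J': "j0 \<notin> J'" unfolding J'_def by auto
    have split: "(\<Sum>j\<in>J. g j) = g j0 + (\<Sum>j\<in>J'. g j)" for g :: "'b \<Rightarrow> complex"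
      using j0 insert.prems(1) unfolding J'_def by (simp add: sum.remove)
    have y'J': "(\<Sum>j\<in>J'. g j * y' j) = (\<Sum>j\<in>J'. g j * y j)" for g
      by (rule sum.cong) (use j0J' in \<open>auto simp: y'_def\<close>)
    have eq0: "(\<Sum>j\<in>J. A r0 j * y' j) = 0"
      unfolding split y'J' using j0 by (simp add: y'_def)
    have eqr: "(\<Sum>j\<in>J. A r j * y' j) = 0" if r: "r \<in> I" for r
    proof -
      have "A r0 j0 * (\<Sum>j\<in>J. A r j * y' j) = (\<Sum>j\<in>J. (B r j + A r j0 * A r0 j) * y' j)"
        by (simp add: sum_distrib_left B_def algebra_simps)
      also have "\<dots> = (\<Sum>j\<in>J. B r j * y' j) + A r j0 * (\<Sum>j\<in>J. A r0 j * y' j)"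
        by (simp add: sum.distrib sum_distrib_left algebra_simps)
      also have "\<dots> = 0" unfolding eq0 unfolding split y'J' using y(3) r by (simp add: B_def)
      finally show ?thesis using j0 by simp
    qed
    have yF: "\<forall>j\<in>J. y' j \<in> F"
    proof
      fix j assume "j \<in> J"
      show "y' j \<in> F"
      proof (cases "j = j0")
        case True
        have "(\<Sum>j\<in>J'. A r0 j * y j) \<in> F"
          using y(1) insert.prems(3) unfolding J'_def by (auto intro!: sf_sum[OF F] sf_mult[OF F])
        then show ?thesis using True j0 insert.prems(3)
          by (auto simp: y'_def intro!: sf_divide[OF F] sf_uminus[OF F])
      next
        case False then show ?thesis using \<open>j \<in> J\<close> y(1) by (auto simp: y'_def J'_def)
      qed
    qed
    have nz: "\<exists>j\<in>J. y' j \<noteq> 0" using y(2) j0J' unfolding J'_def by (auto simp: y'_def)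
    show ?thesis using yF nz eq0 eqr by (intro exI[of _ y']) auto
  qed
qed



lemma rat_of_complex: "x \<in> \<rat> \<Longrightarrow> \<exists>r. x = of_rat r"
  by (auto elim: Rats_cases)

lemma sum4: "(\<Sum>i<(4::nat). f i) = f 0 + f 1 + f 2 + (f 3 :: 'a::comm_monoid_add)"
  by (simp add: eval_nat_numeral)
lemma sum3: "(\<Sum>i<(3::nat). f i) = f 0 + f 1 + (f 2 :: 'a::comm_monoid_add)"
  by (simp add: eval_nat_numeral)
lemma ex4: "(\<exists>i<(4::nat). P i) \<longleftrightarrow> P 0 \<or> P 1 \<or> P 2 \<or> P 3"
  by (auto simp: eval_nat_numeral less_Suc_eq)
lemma ex3: "(\<exists>i<(3::nat). P i) \<longleftrightarrow> P 0 \<or> P 1 \<or> P 2"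
  by (auto simp: eval_nat_numeral less_Suc_eq)
lemma all3: "(\<forall>i<(3::nat). P i) \<longleftrightarrow> P 0 \<and> P 1 \<and> P 2"
  by (auto simp: eval_nat_numeral less_Suc_eq)

lemma indep_conv:
  assumes D: "Q_degree_eq K n" and b: "\<forall>q :: nat \<Rightarrow> rat. (\<Sum>i<n. of_rat (q i) * b i) = 0 \<longrightarrow> (\<forall>i<n. q i = 0)"
    and c: "\<forall>i<n. c i \<in> \<rat>" and eq: "(\<Sum>i<n. c i * b i) = 0"
  shows "\<forall>i<n. c i = 0"
proof -
  define q where "q i = (SOME r. c i = of_rat r)" for i
  have cq: "c i = of_rat (q i)" if "i < n" for i
    using rat_of_complex[OF c[rule_format, OF that]] unfolding q_def by (metis (mono_tags) someI_ex)
  have "(\<Sum>i<n. of_rat (q i) * b i) = 0" using eq cq by (metis (no_types, lifting) lessThan_iff sum.cong)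
  then show ?thesis using b cq by auto
qed

lemma dim_le3:
  fixes z :: "nat \<Rightarrow> complex"
  assumes KF: "is_subfield_C K" and D: "Q_degree_eq K 3" and z: "\<forall>i<4. z i \<in> K"
  shows "\<exists>c. (\<forall>i<4. c i \<in> \<rat>) \<and> (\<exists>i<4. c i \<noteq> 0) \<and> (\<Sum>i<4. c i * z i) = 0"
proof -
  obtain b where bi: "\<forall>q :: nat \<Rightarrow> rat. (\<Sum>i<3. of_rat (q i) * b i) = 0 \<longrightarrow> (\<forall>i<3. q i = 0)"
    and bK: "K = {\<Sum>i<3. of_rat (q i) * b i | q :: nat \<Rightarrow> rat. True}"
    using D unfolding Q_degree_eq_def by blast
  have "\<forall>i\<in>{..<4}. \<exists>q. z i = (\<Sum>j<3. of_rat (q j) * b j)" using z unfolding bK by blast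
  from bchoice[OF this] obtain Q where Q: "\<forall>i\<in>{..<4::nat}. z i = (\<Sum>j<3. of_rat (Q i j) * b j)" by blast
  have "\<exists>c. (\<forall>i\<in>{..<4}. (c i :: complex) \<in> \<rat>) \<and> (\<exists>i\<in>{..<4}. c i \<noteq> 0) \<and>
      (\<forall>j\<in>{..<3}. (\<Sum>i\<in>{..<4}. of_rat (Q i j) * c i) = 0)"
    using hom_sys[OF rats_subfield, of "{..<3::nat}" "{..<4::nat}" "\<lambda>j i. of_rat (Q i j)"] by simp
  then obtain c :: "nat \<Rightarrow> complex" where c: "\<forall>i\<in>{..<4}. c i \<in> \<rat>" "\<exists>i\<in>{..<4}. c i \<noteq> 0"
      "\<forall>j\<in>{..<3}. (\<Sum>i\<in>{..<4}. of_rat (Q i j) * c i) = 0" by blast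
  have e1: "(\<Sum>i<4. c i * z i) = (\<Sum>i<4. \<Sum>j<3. c i * (of_rat (Q i j) * b j))"
    by (rule sum.cong[OF refl]) (simp add: Q sum_distrib_left)
  have e2: "\<dots> = (\<Sum>j<3. \<Sum>i<4. c i * (of_rat (Q i j) * b j))" by (rule sum.swap)
  have e3: "\<dots> = (\<Sum>j<3. (\<Sum>i<4. of_rat (Q i j) * c i) * b j)"
    by (rule sum.cong[OF refl]) (simp add: sum_distrib_left sum_distrib_right mult_ac)
  have e4: "\<dots> = 0" using c(3) by simp
  show ?thesis using c(1,2) e1 e2 e3 e4 by (intro exI[of _ c]) auto
qed

lemma not_span2:
  assumes KF: "is_subfield_C K" and D: "Q_degree_eq K 3"
  shows "\<exists>z\<in>K. \<forall>u v. u \<in> \<rat> \<longrightarrow> v \<in> \<rat> \<longrightarrow> z \<noteq> u + v * \<theta>"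
proof (rule ccontr)
  assume "\<not> ?thesis"
  then have all: "\<forall>z\<in>K. \<exists>u v. u \<in> \<rat> \<and> v \<in> \<rat> \<and> z = u + v * \<theta>" by blast
  obtain b where bi: "\<forall>q :: nat \<Rightarrow> rat. (\<Sum>i<3. of_rat (q i) * b i) = 0 \<longrightarrow> (\<forall>i<3. q i = 0)"
    and bK: "K = {\<Sum>i<3. of_rat (q i) * b i | q :: nat \<Rightarrow> rat. True}"
    using D unfolding Q_degree_eq_def by blast
  have bK': "b j \<in> K" if "j < 3" for j
  proof -
    have "b j = (\<Sum>i<3. of_rat (if i = j then 1 else 0) * b i)"
      unfolding sum3 using that by (auto simp: eval_nat_numeral less_Suc_eq)
    then show ?thesis unfolding bK
      by (rule_tac CollectI, rule_tac exI[of _ "\<lambda>i. if i = j then (1::rat) else 0"], simp)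
  qed
  have "\<forall>j\<in>{..<3::nat}. \<exists>uv. fst uv \<in> \<rat> \<and> snd uv \<in> \<rat> \<and> b j = fst uv + snd uv * \<theta>"
  proof
    fix j :: nat assume "j \<in> {..<3}"
    then obtain u v where "u \<in> \<rat>" "v \<in> \<rat>" "b j = u + v * \<theta>" using all bK' by blast
    then show "\<exists>uv. fst uv \<in> \<rat> \<and> snd uv \<in> \<rat> \<and> b j = fst uv + snd uv * \<theta>"
      by (intro exI[of _ "(u, v)"]) simp
  qed
  then obtain UV where UV: "\<forall>j\<in>{..<3::nat}. fst (UV j) \<in> \<rat> \<and> snd (UV j) \<in> \<rat> \<and> b j = fst (UV j) + snd (UV j) * \<theta>"
    by metis
  define A where "A k j = (if k = (0::nat) then fst (UV j) else snd (UV j))" for k j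
  have "\<exists>c. (\<forall>j\<in>{..<3}. c j \<in> \<rat>) \<and> (\<exists>j\<in>{..<3}. c j \<noteq> 0) \<and>
      (\<forall>k\<in>{..<2}. (\<Sum>j\<in>{..<3}. A k j * c j) = 0)"
    by (rule hom_sys[OF rats_subfield]) (use UV in \<open>auto simp: A_def\<close>)
  then obtain c where c: "\<forall>j\<in>{..<3}. c j \<in> \<rat>" "\<exists>j\<in>{..<3}. c j \<noteq> 0"
      "\<forall>k\<in>{..<2}. (\<Sum>j\<in>{..<3}. A k j * c j) = 0" by blast
  have "(\<Sum>j<3. c j * b j) = (\<Sum>j<3. A 0 j * c j) + (\<Sum>j<3. A 1 j * c j) * \<theta>"
    using UV by (simp add: sum3 A_def algebra_simps)
  also have "\<dots> = 0" using c(3) by simp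
  finally have "\<forall>j<3. c j = 0" using indep_conv[OF D bi] c(1) by auto
  then show False using c(2) by auto
qed

definition indep3 :: "complex \<Rightarrow> bool" where
  "indep3 t \<longleftrightarrow> (\<forall>a b c. a \<in> \<rat> \<longrightarrow> b \<in> \<rat> \<longrightarrow> c \<in> \<rat> \<longrightarrow> a + b * t + c * t^2 = 0 \<longrightarrow> a = 0 \<and> b = 0 \<and> c = 0)"

lemma nonreal_not_rat: "Im t \<noteq> 0 \<Longrightarrow> t \<notin> \<rat>"
  by (auto elim!: Rats_cases')

lemma theta_indep:
  assumes KF: "is_subfield_C K" and D: "Q_degree_eq K 3" and tK: "t \<in> K" and im: "Im t \<noteq> 0"
  shows "indep3 t"
  unfolding indep3_def
proof (intro allI impI)
  fix a b c :: complex
  assume abc: "a \<in> \<rat>" "b \<in> \<rat>" "c \<in> \<rat>" and eq: "a + b * t + c * t^2 = 0"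
  have tq: "t \<notin> \<rat>" using nonreal_not_rat[OF im] .
  have lin: "u = 0 \<and> v = 0" if "u \<in> \<rat>" "v \<in> \<rat>" "u + v * t = 0" for u v
  proof (cases "v = 0")
    case True then show ?thesis using that by simp
  next
    case False
    have "v * t = - u" using that(3) by algebra
    then have "t = - u / v" using False by (metis nonzero_mult_div_cancel_left)
    then have "t \<in> \<rat>" using that by simp
    then show ?thesis using tq by simp
  qed
  show "a = 0 \<and> b = 0 \<and> c = 0"
  proof (cases "c = 0")
    case True then show ?thesis using lin[of a b] abc eq by simp
  next
    case False
    define al where "al = - b / c"
    define be where "be = - a / c"
    have alq: "al \<in> \<rat>" and beq: "be \<in> \<rat>" using abc unfolding al_def be_def by auto
    have ct: "c * t^2 = - a - b * t" using eq by algebra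
    have t2: "t^2 = al * t + be" unfolding al_def be_def using False ct
      by (simp add: field_simps)
    obtain z where zK: "z \<in> K" and zn: "\<forall>u v. u \<in> \<rat> \<longrightarrow> v \<in> \<rat> \<longrightarrow> z \<noteq> u + v * t"
      using not_span2[OF KF D] by blast
    define w where "w = (\<lambda>i::nat. if i = 0 then 1 else if i = 1 then t else if i = 2 then z else t * z)"
    have wK: "\<forall>i<4. w i \<in> K" using tK zK sf_1[OF KF] sf_mult[OF KF] unfolding w_def by auto
    obtain d where d: "\<forall>i<4. d i \<in> \<rat>" "\<exists>i<4. d i \<noteq> 0" "(\<Sum>i<4. d i * w i) = 0"
      using dim_le3[OF KF D wK] by blast
    have dq: "d 0 \<in> \<rat>" "d 1 \<in> \<rat>" "d 2 \<in> \<rat>" "d 3 \<in> \<rat>" using d(1) by auto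
    have deq: "(d 0 + d 1 * t) + (d 2 + d 3 * t) * z = 0"
      using d(3) unfolding sum4 w_def by (simp add: algebra_simps)
    show ?thesis
    proof (cases "d 2 + d 3 * t = 0")
      case True
      then have "d 2 = 0" "d 3 = 0" using lin dq by auto
      moreover have "d 0 + d 1 * t = 0" using deq True by simp
      then have "d 0 = 0" "d 1 = 0" using lin[of "d 0" "d 1"] dq by auto
      ultimately show ?thesis using d(2) by (auto simp: ex4)
    next
      case False
      define e where "e = d 2 + d 3 * al"
      define N where "N = d 2 * d 2 + d 2 * d 3 * al - d 3 * d 3 * be"
      have Nq: "N \<in> \<rat>" using dq alq beq unfolding N_def by auto
      have Nfac: "N = (d 2 + d 3 * t) * (e - d 3 * t)"
        unfolding N_def e_def using t2 by algebra
      have f2: "e - d 3 * t \<noteq> 0"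
      proof
        assume h: "e - d 3 * t = 0"
        have "e + (- d 3) * t = 0" using h by simp
        moreover have eQ: "e \<in> \<rat>" using dq alq unfolding e_def by auto
        moreover have "- d 3 \<in> \<rat>" using dq by auto
        ultimately have "e = 0 \<and> - d 3 = 0" using lin[of e "- d 3"] by blast
        then have "d 3 = 0" "e = 0" by auto
        then show False using False unfolding e_def by simp
      qed
      have N0: "N \<noteq> 0" using Nfac False f2 by simp
      have "z * N = - (d 0 + d 1 * t) * (e - d 3 * t)"
        using deq Nfac by algebra
      also have "\<dots> = - ((d 0 * e - d 1 * d 3 * be) + (d 1 * e - d 0 * d 3 - d 1 * d 3 * al) * t)"
        using t2 by algebra
      finally have "z * N = - ((d 0 * e - d 1 * d 3 * be) + (d 1 * e - d 0 * d 3 - d 1 * d 3 * al) * t)" .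
      then have "z = - ((d 0 * e - d 1 * d 3 * be) + (d 1 * e - d 0 * d 3 - d 1 * d 3 * al) * t) / N"
        using N0 by (metis nonzero_mult_div_cancel_right)
      also have "\<dots> = (- (d 0 * e - d 1 * d 3 * be) / N) + (- (d 1 * e - d 0 * d 3 - d 1 * d 3 * al) / N) * t"
        using N0 by (simp add: field_simps)
      finally have "z = (- (d 0 * e - d 1 * d 3 * be) / N) + (- (d 1 * e - d 0 * d 3 - d 1 * d 3 * al) / N) * t" .
      moreover have "(- (d 0 * e - d 1 * d 3 * be) / N) \<in> \<rat>" "(- (d 1 * e - d 0 * d 3 - d 1 * d 3 * al) / N) \<in> \<rat>"
        using dq alq beq Nq unfolding e_def by auto
      ultimately show ?thesis using zn by blast
    qed
  qed
qed

lemma theta_span: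
  assumes KF: "is_subfield_C K" and D: "Q_degree_eq K 3" and tK: "t \<in> K" and ind: "indep3 t" and zK: "z \<in> K"
  shows "\<exists>a b c. a \<in> \<rat> \<and> b \<in> \<rat> \<and> c \<in> \<rat> \<and> z = a + b * t + c * t^2"
proof -
  define w where "w = (\<lambda>i::nat. if i = 0 then 1 else if i = 1 then t else if i = 2 then t^2 else z)"
  have wK: "\<forall>i<4. w i \<in> K" using tK zK sf_1[OF KF] sf_power[OF KF] unfolding w_def by auto
  obtain d where d: "\<forall>i<4. d i \<in> \<rat>" "\<exists>i<4. d i \<noteq> 0" "(\<Sum>i<4. d i * w i) = 0"
    using dim_le3[OF KF D wK] by blast
  have dq: "d 0 \<in> \<rat>" "d 1 \<in> \<rat>" "d 2 \<in> \<rat>" "d 3 \<in> \<rat>" using d(1) by auto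
  have deq: "d 0 + d 1 * t + d 2 * t^2 + d 3 * z = 0"
    using d(3) unfolding sum4 w_def by simp
  have d3: "d 3 \<noteq> 0"
  proof
    assume "d 3 = 0"
    then have "d 0 = 0 \<and> d 1 = 0 \<and> d 2 = 0" using deq ind dq unfolding indep3_def by auto
    then show False using d(2) \<open>d 3 = 0\<close> by (auto simp: ex4)
  qed
  have d3z: "d 3 * z = - d 0 - d 1 * t - d 2 * t^2" using deq by algebra
  have "z = (- d 0 - d 1 * t - d 2 * t^2) / d 3" using d3z d3 by (metis nonzero_mult_div_cancel_left)
  also have "\<dots> = (- d 0 / d 3) + (- d 1 / d 3) * t + (- d 2 / d 3) * t^2"
    using d3 by (simp add: field_simps)
  finally have "z = (- d 0 / d 3) + (- d 1 / d 3) * t + (- d 2 / d 3) * t^2" .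
  then show ?thesis using dq by (intro exI[of _ "- d 0 / d 3"] exI[of _ "- d 1 / d 3"] exI[of _ "- d 2 / d 3"]) auto
qed



definition Pf :: "(nat \<Rightarrow> complex) \<Rightarrow> complex" where
  "Pf v = v 0 * v 5 - v 1 * v 4 + v 2 * v 3"
definition Bp :: "(nat \<Rightarrow> complex) \<Rightarrow> (nat \<Rightarrow> complex) \<Rightarrow> complex" where
  "Bp u w = u 0 * w 5 + u 5 * w 0 - u 1 * w 4 - u 4 * w 1 + u 2 * w 3 + u 3 * w 2"

lemma lt6: "i < (6::nat) \<Longrightarrow> i = 0 \<or> i = 1 \<or> i = 2 \<or> i = 3 \<or> i = 4 \<or> i = 5" by arith
lemma all6: "(\<forall>i<(6::nat). P i) \<longleftrightarrow> P 0 \<and> P 1 \<and> P 2 \<and> P 3 \<and> P 4 \<and> P 5"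
proof
  assume "\<forall>i<6. P i" then show "P 0 \<and> P 1 \<and> P 2 \<and> P 3 \<and> P 4 \<and> P 5" by simp
next
  assume h: "P 0 \<and> P 1 \<and> P 2 \<and> P 3 \<and> P 4 \<and> P 5"
  show "\<forall>i<6. P i"
  proof (intro allI impI)
    fix i :: nat assume "i < 6" then show "P i" using lt6 h by blast
  qed
qed
lemma ex6: "(\<exists>i<(6::nat). P i) \<longleftrightarrow> P 0 \<or> P 1 \<or> P 2 \<or> P 3 \<or> P 4 \<or> P 5"
proof
  assume "\<exists>i<6. P i" then obtain i where "i < 6" "P i" by blast
  then show "P 0 \<or> P 1 \<or> P 2 \<or> P 3 \<or> P 4 \<or> P 5" using lt6 by blast
next
  assume "P 0 \<or> P 1 \<or> P 2 \<or> P 3 \<or> P 4 \<or> P 5"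
  moreover have "(0::nat) < 6 \<and> (1::nat) < 6 \<and> (2::nat) < 6 \<and> (3::nat) < 6 \<and> (4::nat) < 6 \<and> (5::nat) < 6" by simp
  ultimately show "\<exists>i<6. P i" by blast
qed

lemma Pf_cong: "\<forall>m<6. u m = v m \<Longrightarrow> Pf u = Pf v"
  unfolding all6 Pf_def by simp
lemma Pf_rat: "\<forall>m<6. u m \<in> \<rat> \<Longrightarrow> Pf u \<in> \<rat>"
  unfolding all6 Pf_def by auto
lemma Bp_rat: "\<forall>m<6. u m \<in> \<rat> \<Longrightarrow> \<forall>m<6. w m \<in> \<rat> \<Longrightarrow> Bp u w \<in> \<rat>"
  unfolding all6 Bp_def by auto
lemma Pf_expand:
  "Pf (\<lambda>m. a m + b m * x + c m * x^2) =
     Pf a + Bp a b * x + (Pf b + Bp a c) * x^2 + Bp b c * x^3 + Pf c * x^4"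
  unfolding Pf_def Bp_def by algebra
lemma Pf_expand1:
  "Pf (\<lambda>m. a m + b m * x) = Pf a + Bp a b * x + Pf b * x^2"
  unfolding Pf_def Bp_def by algebra
lemma Pf_smult: "Pf (\<lambda>m. k * v m) = k^2 * Pf v"
  unfolding Pf_def by algebra



lemma indep3_D:
  "indep3 t \<Longrightarrow> a \<in> \<rat> \<Longrightarrow> b \<in> \<rat> \<Longrightarrow> c \<in> \<rat> \<Longrightarrow> a + b * t + c * t^2 = 0 \<Longrightarrow> a = 0 \<and> b = 0 \<and> c = 0"
  unfolding indep3_def by blast

lemma springer:
  assumes ind: "indep3 t" and eq: "e0 \<in> \<rat>" "e1 \<in> \<rat>" "e2 \<in> \<rat>" "t^3 = e0 + e1 * t + e2 * t^2"
    and abc: "\<forall>m<6. a m \<in> \<rat>" "\<forall>m<6. b m \<in> \<rat>" "\<forall>m<6. c m \<in> \<rat>"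
    and z: "Pf (\<lambda>m. a m + b m * t + c m * t^2) = 0"
    and nz: "\<exists>m<6. a m + b m * t + c m * t^2 \<noteq> 0"
  shows "\<exists>\<alpha> \<beta> \<gamma>. \<alpha> \<in> \<rat> \<and> \<beta> \<in> \<rat> \<and> \<gamma> \<in> \<rat> \<and> Pf (\<lambda>m. \<alpha> * a m + \<beta> * b m + \<gamma> * c m) = 0 \<and>
     (\<exists>m<6. \<alpha> * a m + \<beta> * b m + \<gamma> * c m \<noteq> 0)"
proof -
  have rats: "Pf a \<in> \<rat>" "Pf b \<in> \<rat>" "Pf c \<in> \<rat>" "Bp a b \<in> \<rat>" "Bp a c \<in> \<rat>" "Bp b c \<in> \<rat>"
    using abc by (auto intro: Pf_rat Bp_rat)
  have hz: "Pf a + Bp a b * t + (Pf b + Bp a c) * t^2 + Bp b c * t^3 + Pf c * t^4 = 0"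
    using z unfolding Pf_expand .
  have tq: "t \<noteq> x" if "x \<in> \<rat>" for x
  proof
    assume "t = x"
    then have "(- x) + 1 * t + 0 * t^2 = 0" by simp
    then show False using indep3_D[OF ind, of "- x" 1 0] that by auto
  qed
  show ?thesis
  proof (cases "\<forall>m<6. c m = 0")
    case True
    have Pc: "Pf c = 0" "Bp a c = 0" "Bp b c = 0" using True unfolding all6 Pf_def Bp_def by auto
    have "Pf a + Bp a b * t + Pf b * t^2 = 0" using hz Pc by simp
    then have ab: "Pf a = 0" "Pf b = 0" using indep3_D[OF ind] rats by blast+
    show ?thesis
    proof (cases "\<exists>m<6. b m \<noteq> 0")
      case True
      then show ?thesis using ab by (intro exI[of _ 0] exI[of _ 1]) simp
    next
      case False
      then have "\<exists>m<6. a m \<noteq> 0" using nz \<open>\<forall>m<6. c m = 0\<close> by auto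
      then show ?thesis using ab by (intro exI[of _ 1] exI[of _ 0] exI[of _ 0]) simp
    qed
  next
    case cnz: False
    show ?thesis
    proof (cases "Pf c = 0")
      case True
      then show ?thesis using cnz by (intro exI[of _ 0] exI[of _ 0] exI[of _ 1]) auto
    next
      case False
      define h0 where "h0 = Pf a"
      define h1 where "h1 = Bp a b"
      define h2 where "h2 = Pf b + Bp a c"
      define h3 where "h3 = Bp b c"
      define h4 where "h4 = Pf c"
      define L where "L = h3 + h4 * e2"
      define r2 where "r2 = h2 + h4 * e1 + L * e2"
      define r1 where "r1 = h1 + h4 * e0 + L * e1"
      define r0 where "r0 = h0 + L * e0"
      have hq: "h0 \<in> \<rat>" "h1 \<in> \<rat>" "h2 \<in> \<rat>" "h3 \<in> \<rat>" "h4 \<in> \<rat>"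
        using rats unfolding h0_def h1_def h2_def h3_def h4_def by auto
      have rq: "r0 \<in> \<rat>" "r1 \<in> \<rat>" "r2 \<in> \<rat>" "L \<in> \<rat>"
        using hq eq unfolding r0_def r1_def r2_def L_def by auto
      have ident: "h0 + h1 * x + h2 * x^2 + h3 * x^3 + h4 * x^4 =
          (h4 * x + L) * (x^3 - e2 * x^2 - e1 * x - e0) + (r0 + r1 * x + r2 * x^2)" for x
        unfolding r0_def r1_def r2_def L_def by algebra
      have "r0 + r1 * t + r2 * t^2 = 0"
        using ident[of t] hz eq(4) unfolding h0_def h1_def h2_def h3_def h4_def by simp
      then have r0: "r0 = 0" "r1 = 0" "r2 = 0" using indep3_D[OF ind] rq by blast+
      define t0 where "t0 = - L / h4"
      have h4: "h4 \<noteq> 0" using False unfolding h4_def .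
      have t0q: "t0 \<in> \<rat>" using rq hq unfolding t0_def by auto
      have "h4 * t0 + L = 0" using h4 unfolding t0_def by simp
      then have "h0 + h1 * t0 + h2 * t0^2 + h3 * t0^3 + h4 * t0^4 = 0" using ident[of t0] r0 by simp
      then have P0: "Pf (\<lambda>m. a m + b m * t0 + c m * t0^2) = 0"
        unfolding Pf_expand h0_def h1_def h2_def h3_def h4_def .
      show ?thesis
      proof (cases "\<exists>m<6. a m + b m * t0 + c m * t0^2 \<noteq> 0")
        case True
        then show ?thesis using P0 t0q
          by (intro exI[of _ 1] exI[of _ t0] exI[of _ "t0^2"]) (auto simp: mult.commute)
      next
        case a0: False
        define b' where "b' m = b m + t0 * c m" for m
        have fac: "\<forall>m<6. a m + b m * t + c m * t^2 = (t - t0) * (b' m + c m * t)"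
        proof (intro allI impI)
          fix m :: nat assume "m < 6"
          then have "a m + b m * t0 + c m * t0^2 = 0" using a0 by auto
          then show "a m + b m * t + c m * t^2 = (t - t0) * (b' m + c m * t)"
            unfolding b'_def by algebra
        qed
        have "Pf (\<lambda>m. (t - t0) * (b' m + c m * t)) = 0"
          using z Pf_cong[OF fac] by simp
        then have "(t - t0)^2 * Pf (\<lambda>m. b' m + c m * t) = 0" unfolding Pf_smult .
        moreover have "t - t0 \<noteq> 0" using tq[OF t0q] by simp
        ultimately have "Pf (\<lambda>m. b' m + c m * t) = 0" by simp
        then have E: "Pf b' + Bp b' c * t + Pf c * t^2 = 0" unfolding Pf_expand1 .
        have bq: "\<forall>m<6. b' m \<in> \<rat>" using abc t0q unfolding b'_def by auto
        have q1: "Pf b' \<in> \<rat>" by (rule Pf_rat[OF bq])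
        have q2: "Bp b' c \<in> \<rat>" by (rule Bp_rat[OF bq abc(3)])
        have "Pf c = 0" using indep3_D[OF ind q1 q2 rats(3) E] by blast
        then show ?thesis using False by simp
      qed
    qed
  qed
qed



definition pw :: "(nat \<Rightarrow> complex) \<Rightarrow> (nat \<Rightarrow> complex) \<Rightarrow> nat \<Rightarrow> complex" where
  "pw x y k = (if k = 0 then x 0 * y 1 - x 1 * y 0 else if k = 1 then x 0 * y 2 - x 2 * y 0
     else if k = 2 then x 0 * y 3 - x 3 * y 0 else if k = 3 then x 1 * y 2 - x 2 * y 1
     else if k = 4 then x 1 * y 3 - x 3 * y 1 else x 2 * y 3 - x 3 * y 2)"

lemma pw_vals: "pw x y 0 = x 0 * y 1 - x 1 * y 0" "pw x y 1 = x 0 * y 2 - x 2 * y 0"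
  "pw x y 2 = x 0 * y 3 - x 3 * y 0" "pw x y 3 = x 1 * y 2 - x 2 * y 1"
  "pw x y 4 = x 1 * y 3 - x 3 * y 1" "pw x y 5 = x 2 * y 3 - x 3 * y 2"
  by (simp_all add: pw_def)

definition vec4 :: "complex \<Rightarrow> complex \<Rightarrow> complex \<Rightarrow> complex \<Rightarrow> nat \<Rightarrow> complex" where
  "vec4 a b c d k = (if k = 0 then a else if k = 1 then b else if k = 2 then c else d)"

lemma vec4_vals: "vec4 a b c d 0 = a" "vec4 a b c d 1 = b" "vec4 a b c d 2 = c" "vec4 a b c d 3 = d"
  by (simp_all add: vec4_def)

lemma lt4: "i < (4::nat) \<Longrightarrow> i = 0 \<or> i = 1 \<or> i = 2 \<or> i = 3" by arith

lemma vec4_rat: "a \<in> \<rat> \<Longrightarrow> b \<in> \<rat> \<Longrightarrow> c \<in> \<rat> \<Longrightarrow> d \<in> \<rat> \<Longrightarrow> \<forall>i<4. vec4 a b c d i \<in> \<rat>"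
  using lt4 vec4_vals by metis

lemma decomp:
  assumes P: "Pf v = 0" and vq: "\<forall>m<6. v m \<in> \<rat>" and nz: "\<exists>m<6. v m \<noteq> 0"
  shows "\<exists>x y. (\<forall>i<4. x i \<in> \<rat>) \<and> (\<forall>i<4. y i \<in> \<rat>) \<and> (\<forall>m<6. pw x y m = v m)"
proof -
  have hP: "v 0 * v 5 - v 1 * v 4 + v 2 * v 3 = 0" using P unfolding Pf_def .
  have q: "v 0 \<in> \<rat>" "v 1 \<in> \<rat>" "v 2 \<in> \<rat>" "v 3 \<in> \<rat>" "v 4 \<in> \<rat>" "v 5 \<in> \<rat>"
    using vq unfolding all6 by auto
  define R0 where "R0 = vec4 0 (v 0) (v 1) (v 2)"
  define R1 where "R1 c = vec4 (c * - v 0) 0 (c * v 3) (c * v 4)" for c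
  define R2 where "R2 c = vec4 (c * - v 1) (c * - v 3) 0 (c * v 5)" for c
  define R3 where "R3 c = vec4 (c * - v 2) (c * - v 4) (c * - v 5) 0" for c
  have Rq: "\<forall>i<4. R0 i \<in> \<rat>" "c \<in> \<rat> \<Longrightarrow> \<forall>i<4. R1 c i \<in> \<rat>" "c \<in> \<rat> \<Longrightarrow> \<forall>i<4. R2 c i \<in> \<rat>"
    "c \<in> \<rat> \<Longrightarrow> \<forall>i<4. R3 c i \<in> \<rat>" for c
    unfolding R0_def R1_def R2_def R3_def using q by (auto simp: vec4_def)
  have R1' : "\<forall>i<4. R1 1 i \<in> \<rat>" "\<forall>i<4. R2 1 i \<in> \<rat>" using Rq(2,3)[of 1] by auto
  consider "v 0 \<noteq> 0" | "v 1 \<noteq> 0" | "v 2 \<noteq> 0" | "v 3 \<noteq> 0" | "v 4 \<noteq> 0" | "v 5 \<noteq> 0"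
    using nz unfolding ex6 by blast
  then show ?thesis
  proof cases
    case 1
    define c where "c = inverse (v 0)"
    have hc: "c * v 0 = 1" using 1 unfolding c_def by simp
    have cq: "c \<in> \<rat>" using q unfolding c_def by simp
    have "\<forall>m<6. pw R0 (R1 c) m = v m"
      unfolding all6 pw_vals R0_def R1_def vec4_vals using hc hP by (intro conjI; algebra)
    then show ?thesis using Rq(1) Rq(2)[OF cq] by blast
  next
    case 2
    define c where "c = inverse (v 1)"
    have hc: "c * v 1 = 1" using 2 unfolding c_def by simp
    have cq: "c \<in> \<rat>" using q unfolding c_def by simp
    have "\<forall>m<6. pw R0 (R2 c) m = v m"
      unfolding all6 pw_vals R0_def R2_def vec4_vals using hc hP by (intro conjI; algebra)
    then show ?thesis using Rq(1) Rq(3)[OF cq] by blast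
  next
    case 3
    define c where "c = inverse (v 2)"
    have hc: "c * v 2 = 1" using 3 unfolding c_def by simp
    have cq: "c \<in> \<rat>" using q unfolding c_def by simp
    have "\<forall>m<6. pw R0 (R3 c) m = v m"
      unfolding all6 pw_vals R0_def R3_def vec4_vals using hc hP by (intro conjI; algebra)
    then show ?thesis using Rq(1) Rq(4)[OF cq] by blast
  next
    case 4
    define c where "c = inverse (v 3)"
    have hc: "c * v 3 = 1" using 4 unfolding c_def by simp
    have cq: "c \<in> \<rat>" using q unfolding c_def by simp
    have "\<forall>m<6. pw (R1 1) (R2 c) m = v m"
      unfolding all6 pw_vals R1_def R2_def vec4_vals using hc hP by (intro conjI; algebra)
    then show ?thesis using R1'(1) Rq(3)[OF cq] by blast
  next
    case 5
    define c where "c = inverse (v 4)"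
    have hc: "c * v 4 = 1" using 5 unfolding c_def by simp
    have cq: "c \<in> \<rat>" using q unfolding c_def by simp
    have "\<forall>m<6. pw (R1 1) (R3 c) m = v m"
      unfolding all6 pw_vals R1_def R3_def vec4_vals using hc hP by (intro conjI; algebra)
    then show ?thesis using R1'(1) Rq(4)[OF cq] by blast
  next
    case 6
    define c where "c = inverse (v 5)"
    have hc: "c * v 5 = 1" using 6 unfolding c_def by simp
    have cq: "c \<in> \<rat>" using q unfolding c_def by simp
    have "\<forall>m<6. pw (R2 1) (R3 c) m = v m"
      unfolding all6 pw_vals R2_def R3_def vec4_vals using hc hP by (intro conjI; algebra)
    then show ?thesis using R1'(2) Rq(4)[OF cq] by blast
  qed
qed



lemma common_den:
  fixes f :: "nat \<Rightarrow> complex"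
  shows "(\<forall>i<n. f i \<in> \<rat>) \<Longrightarrow> \<exists>N::int. N > 0 \<and> (\<forall>i<n. of_int N * f i \<in> \<int>)"
proof (induction n)
  case 0 then show ?case by (intro exI[of _ 1]) simp
next
  case (Suc n)
  then obtain N :: int where N: "N > 0" "\<forall>i<n. of_int N * f i \<in> \<int>" by auto
  have "f n \<in> \<rat>" using Suc.prems by auto
  then obtain a b :: int where ab: "b > 0" "f n = of_int a / of_int b" by (auto elim: Rats_cases')
  have "\<forall>i<Suc n. of_int (N * b) * f i \<in> \<int>"
  proof (intro allI impI)
    fix i assume "i < Suc n"
    show "of_int (N * b) * f i \<in> \<int>"
    proof (cases "i = n")
      case True
      have fb: "of_int b * f n = of_int a" using ab by simp
      have "of_int (N * b) * f i = of_int N * (of_int b * f n)" using True by (simp add: mult.assoc)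
      also have "\<dots> = of_int (N * a)" using fb by simp
      finally have e: "of_int (N * b) * f i = of_int (N * a)" .
      show ?thesis by (subst e) (rule Ints_of_int)
    next
      case False
      then have "of_int N * f i \<in> \<int>" using N \<open>i < Suc n\<close> by auto
      then have "of_int b * (of_int N * f i) \<in> \<int>" by simp
      then show ?thesis by (simp add: mult.assoc mult.left_commute)
    qed
  qed
  then show ?case using N ab by (intro exI[of _ "N * b"]) simp
qed

lemma rat_real: "x \<in> \<rat> \<Longrightarrow> (x::complex) \<in> \<real>"
  by (auto elim!: Rats_cases')

lemma inj_Pi:
  fixes p q r s :: complex and z :: "nat \<Rightarrow> complex"
  assumes det: "Im p * Im s - Im q * Im r \<noteq> 0" and zr: "\<forall>k<4. z k \<in> \<real>"
    and e1: "p * z 0 + q * z 1 + z 2 = 0" and e2: "r * z 0 + s * z 1 + z 3 = 0"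
  shows "\<forall>k<4. z k = 0"
proof -
  have im: "Im (z k) = 0" if "k < 4" for k using zr that complex_is_Real_iff by blast
  have i1: "Im p * Re (z 0) + Im q * Re (z 1) = 0"
    using arg_cong[OF e1, of Im] im[of 0] im[of 1] im[of 2] by simp
  have i2: "Im r * Re (z 0) + Im s * Re (z 1) = 0"
    using arg_cong[OF e2, of Im] im[of 0] im[of 1] im[of 3] by simp
  have "Re (z 0) * (Im p * Im s - Im q * Im r) = 0" using i1 i2 by algebra
  then have a0: "Re (z 0) = 0" using det by simp
  have "Re (z 1) * (Im p * Im s - Im q * Im r) = 0" using i1 i2 by algebra
  then have a1: "Re (z 1) = 0" using det by simp
  have z0: "z 0 = 0" using a0 im[of 0] by (simp add: complex_eq_iff)
  have z1: "z 1 = 0" using a1 im[of 1] by (simp add: complex_eq_iff)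
  have z2: "z 2 = 0" using e1 z0 z1 by simp
  have z3: "z 3 = 0" using e2 z0 z1 by simp
  show ?thesis using z0 z1 z2 z3 lt4 by auto
qed

definition latv :: "complex^2^2 \<Rightarrow> int \<Rightarrow> int \<Rightarrow> int \<Rightarrow> int \<Rightarrow> complex^2" where
  "latv \<tau> A1 A2 B1 B2 = (\<chi> i. (\<Sum>j\<in>UNIV. of_int ((\<lambda>j::2. if j = 1 then A1 else A2) j) * \<tau>$i$j)
      + of_int ((\<lambda>i::2. if i = 1 then B1 else B2) i))"

lemma latv_in: "latv \<tau> A1 A2 B1 B2 \<in> period_lattice \<tau>"
  unfolding latv_def period_lattice_def by (rule CollectI, rule exI, rule exI, rule conjI[OF refl TrueI])

lemma latv_comp: "latv \<tau> A1 A2 B1 B2 $ 1 = of_int A1 * \<tau>$1$1 + of_int A2 * \<tau>$1$2 + of_int B1"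
  "latv \<tau> A1 A2 B1 B2 $ 2 = of_int A1 * \<tau>$2$1 + of_int A2 * \<tau>$2$2 + of_int B2"
  unfolding latv_def by (simp_all add: sum_2)

lemma int_of: "x \<in> \<int> \<Longrightarrow> \<exists>k. x = of_int k"
  by (auto elim: Ints_cases)

lemma final:
  fixes \<tau> :: "complex^2^2" and x y :: "nat \<Rightarrow> complex"
  defines "p \<equiv> \<tau>$1$1" and "q \<equiv> \<tau>$1$2" and "r \<equiv> \<tau>$2$1" and "s \<equiv> \<tau>$2$2"
  assumes det: "Im p * Im s - Im q * Im r \<noteq> 0"
    and xq: "\<forall>i<4. x i \<in> \<rat>" and yq: "\<forall>i<4. y i \<in> \<rat>"
    and nz: "\<exists>m<6. pw x y m \<noteq> 0"
    and D: "(p * x 0 + q * x 1 + x 2) * (r * y 0 + s * y 1 + y 3) = (r * x 0 + s * x 1 + x 3) * (p * y 0 + q * y 1 + y 2)"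
  shows "\<not> is_simple_surface \<tau>"
proof -
  define f where "f i = (if i < 4 then x i else y (i - 4))" for i
  have "\<forall>i<8. f i \<in> \<rat>" using xq yq unfolding f_def by auto
  then obtain N :: int where N: "N > 0" "\<forall>i<8. of_int N * f i \<in> \<int>" using common_den by blast
  have xz: "of_int N * x i \<in> \<int>" if "i < 4" for i using N(2)[rule_format, of i] that unfolding f_def by simp
  have yz: "of_int N * y i \<in> \<int>" if "i < 4" for i using N(2)[rule_format, of "i + 4"] that unfolding f_def by simp
  define ax where "ax i = (SOME k. of_int N * x i = of_int k)" for i
  define ay where "ay i = (SOME k. of_int N * y i = of_int k)" for i
  have ax: "of_int N * x i = of_int (ax i)" if "i < 4" for i
    using int_of[OF xz[OF that]] unfolding ax_def by (rule someI_ex)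
  have ay: "of_int N * y i = of_int (ay i)" if "i < 4" for i
    using int_of[OF yz[OF that]] unfolding ay_def by (rule someI_ex)
  define X1 where "X1 = p * x 0 + q * x 1 + x 2"
  define X2 where "X2 = r * x 0 + s * x 1 + x 3"
  define Y1 where "Y1 = p * y 0 + q * y 1 + y 2"
  define Y2 where "Y2 = r * y 0 + s * y 1 + y 3"
  define u where "u = latv \<tau> (ax 0) (ax 1) (ax 2) (ax 3)"
  define v where "v = latv \<tau> (ay 0) (ay 1) (ay 2) (ay 3)"
  have axs: "of_int N * x 0 = of_int (ax 0)" "of_int N * x 1 = of_int (ax 1)"
    "of_int N * x 2 = of_int (ax 2)" "of_int N * x 3 = of_int (ax 3)" by (rule ax; simp)+
  have ays: "of_int N * y 0 = of_int (ay 0)" "of_int N * y 1 = of_int (ay 1)"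
    "of_int N * y 2 = of_int (ay 2)" "of_int N * y 3 = of_int (ay 3)" by (rule ay; simp)+
  have u1: "u $ 1 = of_int N * X1"
    unfolding u_def latv_comp X1_def p_def q_def by (simp add: axs[symmetric] axs[symmetric, unfolded One_nat_def] algebra_simps)
  have u2: "u $ 2 = of_int N * X2"
    unfolding u_def latv_comp X2_def r_def s_def by (simp add: axs[symmetric] axs[symmetric, unfolded One_nat_def] algebra_simps)
  have v1: "v $ 1 = of_int N * Y1"
    unfolding v_def latv_comp Y1_def p_def q_def by (simp add: ays[symmetric] ays[symmetric, unfolded One_nat_def] algebra_simps)
  have v2: "v $ 2 = of_int N * Y2"
    unfolding v_def latv_comp Y2_def r_def s_def by (simp add: ays[symmetric] ays[symmetric, unfolded One_nat_def] algebra_simps)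
  have indep: "\<forall>a b :: real. a *\<^sub>R u + b *\<^sub>R v = 0 \<longrightarrow> a = 0 \<and> b = 0"
  proof (intro allI impI)
    fix a b :: real
    assume h: "a *\<^sub>R u + b *\<^sub>R v = 0"
    have h1: "of_real a * (of_int N * X1) + of_real b * (of_int N * Y1) = 0"
    proof -
      have "(a *\<^sub>R u + b *\<^sub>R v) $ 1 = of_real a * u $ 1 + of_real b * v $ 1"
        by (simp only: vector_add_component vector_scaleR_component scaleR_conv_of_real[where 'a=complex])
      then show ?thesis using h u1 v1 by simp
    qed
    have h2: "of_real a * (of_int N * X2) + of_real b * (of_int N * Y2) = 0"
    proof -
      have "(a *\<^sub>R u + b *\<^sub>R v) $ 2 = of_real a * u $ 2 + of_real b * v $ 2"
        by (simp only: vector_add_component vector_scaleR_component scaleR_conv_of_real[where 'a=complex])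
      then show ?thesis using h u2 v2 by simp
    qed
    define z where "z k = of_real a * of_int N * x k + of_real b * of_int N * y k" for k
    have zr: "\<forall>k<4. z k \<in> \<real>" using xq yq rat_real unfolding z_def by auto
    have e1: "p * z 0 + q * z 1 + z 2 = 0" using h1 unfolding z_def X1_def Y1_def by algebra
    have e2: "r * z 0 + s * z 1 + z 3 = 0" using h2 unfolding z_def X2_def Y2_def by algebra
    have z0: "\<forall>k<4. z k = 0" by (rule inj_Pi[OF det zr e1 e2])
    then have zz: "z 0 = 0" "z 1 = 0" "z 2 = 0" "z 3 = 0" by auto
    have Z: "of_real a * of_int N * x 0 + of_real b * of_int N * y 0 = 0"
      "of_real a * of_int N * x 1 + of_real b * of_int N * y 1 = 0"
      "of_real a * of_int N * x 2 + of_real b * of_int N * y 2 = 0"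
      "of_real a * of_int N * x 3 + of_real b * of_int N * y 3 = 0" using zz unfolding z_def by simp_all
    have A: "(of_real a * of_int N) * pw x y m = 0" if "m < 6" for m
    proof -
      have "(of_real a * of_int N) * pw x y 0 = 0" "(of_real a * of_int N) * pw x y 1 = 0"
        "(of_real a * of_int N) * pw x y 2 = 0" "(of_real a * of_int N) * pw x y 3 = 0"
        "(of_real a * of_int N) * pw x y 4 = 0" "(of_real a * of_int N) * pw x y 5 = 0"
        unfolding pw_vals using Z by algebra+
      then show ?thesis using lt6[OF that] by auto
    qed
    have B: "(of_real b * of_int N) * pw x y m = 0" if "m < 6" for m
    proof -
      have "(of_real b * of_int N) * pw x y 0 = 0" "(of_real b * of_int N) * pw x y 1 = 0"
        "(of_real b * of_int N) * pw x y 2 = 0" "(of_real b * of_int N) * pw x y 3 = 0"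
        "(of_real b * of_int N) * pw x y 4 = 0" "(of_real b * of_int N) * pw x y 5 = 0"
        unfolding pw_vals using Z by algebra+
      then show ?thesis using lt6[OF that] by auto
    qed
    obtain m where m: "m < 6" "pw x y m \<noteq> 0" using nz by blast
    show "a = 0 \<and> b = 0" using A[OF m(1)] B[OF m(1)] m(2) N(1) by simp
  qed
  have unz: "u \<noteq> 0"
  proof
    assume "u = 0"
    then have "1 *\<^sub>R u + 0 *\<^sub>R v = 0" by simp
    then show False using indep[rule_format, of 1 0] by simp
  qed
  have Xnz: "X1 \<noteq> 0 \<or> X2 \<noteq> 0" using unz u1 u2 by (auto simp: vec_eq_iff forall_2)
  have DD: "X1 * Y2 = X2 * Y1" using D unfolding X1_def X2_def Y1_def Y2_def .
  define lam where "lam = (if X1 \<noteq> 0 then Y1 / X1 else Y2 / X2)"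
  have vl: "v = lam *s u"
  proof -
    have "v $ 1 = lam * u $ 1 \<and> v $ 2 = lam * u $ 2"
    proof (cases "X1 \<noteq> 0")
      case True
      have "Y2 = Y1 / X1 * X2" using DD True by (simp add: field_simps)
      then show ?thesis using True unfolding lam_def u1 u2 v1 v2 by simp
    next
      case False
      then have X2: "X2 \<noteq> 0" using Xnz by simp
      have "Y1 = 0" using DD False X2 by simp
      then show ?thesis using False X2 unfolding lam_def u1 u2 v1 v2 by simp
    qed
    then show ?thesis by (simp add: vec_eq_iff forall_2)
  qed
  have "u = 1 *s u" by (simp add: vec_eq_iff)
  moreover have uin: "u \<in> period_lattice \<tau>" unfolding u_def by (rule latv_in)
  moreover have vin: "v \<in> period_lattice \<tau>" unfolding v_def by (rule latv_in)
  ultimately have W: "u \<noteq> 0 \<and> u \<in> period_lattice \<tau> \<and> v \<in> period_lattice \<tau> \<and> (\<exists>c. u = c *s u) \<and> (\<exists>d. v = d *s u) \<and>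
      (\<forall>a b :: real. a *\<^sub>R u + b *\<^sub>R v = 0 \<longrightarrow> a = 0 \<and> b = 0)"
    using unz vl indep by blast
  show ?thesis unfolding is_simple_surface_def
    apply (rule notI, erule notE)
    apply (rule exI[of _ u], rule exI[of _ u], rule exI[of _ v])
    using W by blast
qed



lemma sum6: "(\<Sum>i<(6::nat). f i) = f 0 + f 1 + f 2 + f 3 + f 4 + (f 5 :: 'a::comm_monoid_add)"
  by (simp add: eval_nat_numeral)

lemma sum123: "(\<Sum>l\<in>{1,2,3::nat}. g l) = g 1 + g 2 + (g 3 :: 'a::comm_monoid_add)"
  by (simp add: add.assoc)

lemma rat_sum: fixes f :: "nat \<Rightarrow> complex" shows "\<forall>m<n. f m \<in> \<rat> \<Longrightarrow> (\<Sum>m<n. f m) \<in> \<rat>"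
  by (induction n) auto

theorem mainTheorem10:
  fixes \<tau> :: "complex^2^2"
  assumes "is_abelian_surface \<tau>"
    and "is_simple_surface \<tau>"
  shows "\<not> Q_degree_eq (gen_field {\<tau>$i$j | i j. True}) 3"
proof
  define K where "K = gen_field {\<tau>$i$j | i j. True}"
  assume D: "Q_degree_eq (gen_field {\<tau>$i$j | i j. True}) 3"
  then have D: "Q_degree_eq K 3" unfolding K_def .
  have KF: "is_subfield_C K" unfolding K_def by (rule gen_field_subfield)
  define p where "p = \<tau>$1$1"
  define q where "q = \<tau>$1$2"
  define r where "r = \<tau>$2$1"
  define s where "s = \<tau>$2$2"
  have inK: "\<tau>$i$j \<in> K" for i j
  proof -
    have "\<tau>$i$j \<in> {\<tau>$i$j | i j. True}" by blast
    then show ?thesis unfolding K_def by (rule subsetD[OF gen_field_sup])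
  qed
  have pK: "p \<in> K" "q \<in> K" "r \<in> K" "s \<in> K" unfolding p_def q_def r_def s_def using inK by auto
  have det: "Im p * Im s - Im q * Im r \<noteq> 0"
    using assms(1) unfolding is_abelian_surface_def det_2 p_def q_def r_def s_def by simp
  obtain t where tK: "t \<in> K" and tIm: "Im t \<noteq> 0"
  proof -
    have "Im p \<noteq> 0 \<or> Im q \<noteq> 0" using det by auto
    then show ?thesis using that pK by blast
  qed
  have ind: "indep3 t" by (rule theta_indep[OF KF D tK tIm])
  have span: "\<exists>a b c. a \<in> \<rat> \<and> b \<in> \<rat> \<and> c \<in> \<rat> \<and> z = a + b * t + c * t^2" if "z \<in> K" for z
    by (rule theta_span[OF KF D tK ind that])
  obtain e0 e1 e2 where e: "e0 \<in> \<rat>" "e1 \<in> \<rat>" "e2 \<in> \<rat>" "t^3 = e0 + e1 * t + e2 * t^2"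
    using span[OF sf_power[OF KF tK, of 3]] by blast
  define W where "W k = (if k = 0 then p * s - q * r else if k = 1 then - r else if k = 2 then p
      else if k = 3 then - s else if k = 4 then q else 1)" for k :: nat
  have WK: "W k \<in> K" for k
    unfolding W_def using pK KF by (auto intro!: sf_diff sf_mult sf_uminus sf_1)
  define CC where "CC k = (SOME abc. fst abc \<in> \<rat> \<and> fst (snd abc) \<in> \<rat> \<and> snd (snd abc) \<in> \<rat> \<and>
      W k = fst abc + fst (snd abc) * t + snd (snd abc) * t^2)" for k
  have CCp: "fst (CC k) \<in> \<rat> \<and> fst (snd (CC k)) \<in> \<rat> \<and> snd (snd (CC k)) \<in> \<rat> \<and>
      W k = fst (CC k) + fst (snd (CC k)) * t + snd (snd (CC k)) * t^2" for k
  proof -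
    obtain a b c where "a \<in> \<rat>" "b \<in> \<rat>" "c \<in> \<rat>" "W k = a + b * t + c * t^2" using span[OF WK] by blast
    then have "\<exists>abc. fst abc \<in> \<rat> \<and> fst (snd abc) \<in> \<rat> \<and> snd (snd abc) \<in> \<rat> \<and>
      W k = fst abc + fst (snd abc) * t + snd (snd abc) * t^2" by (intro exI[of _ "(a, b, c)"]) simp
    then show ?thesis unfolding CC_def by (rule someI_ex)
  qed
  define C where "C j k = (if j = (0::nat) then fst (CC k) else if j = 1 then fst (snd (CC k)) else snd (snd (CC k)))" for j k
  have Cq: "C j k \<in> \<rat>" for j k unfolding C_def using CCp by auto
  have Wc: "W k = C 0 k + C 1 k * t + C 2 k * t^2" for k unfolding C_def using CCp by simp
  have lincomb: "(\<Sum>m<6. W m * u m) = (\<Sum>m<6. C 0 m * u m) + (\<Sum>m<6. C 1 m * u m) * t + (\<Sum>m<6. C 2 m * u m) * t^2" for u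
  proof -
    have "(\<Sum>m<6. W m * u m) = (\<Sum>m<6. C 0 m * u m + (C 1 m * u m) * t + (C 2 m * u m) * t^2)"
      by (rule sum.cong[OF refl]) (simp add: Wc algebra_simps)
    also have "\<dots> = (\<Sum>m<6. C 0 m * u m) + (\<Sum>m<6. C 1 m * u m) * t + (\<Sum>m<6. C 2 m * u m) * t^2"
      by (simp add: sum.distrib sum_distrib_right)
    finally show ?thesis .
  qed
  define A where "A j l = (if l = (1::nat) then C j 0 + p * C j 3 + r * C j 4 else if l = 2 then C j 1 + r * C j 5
      else C j 2 - p * C j 5)" for j l
  have AK: "\<forall>j\<in>{1,2::nat}. \<forall>l\<in>{1,2,3::nat}. A j l \<in> K"
    unfolding A_def using pK Cq sf_rats[OF KF] KF by (auto intro!: sf_add sf_mult sf_diff)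
  obtain y where yK: "\<forall>l\<in>{1,2,3::nat}. y l \<in> K" and ynz: "\<exists>l\<in>{1,2,3::nat}. y l \<noteq> 0"
    and yeq: "\<forall>j\<in>{1,2::nat}. (\<Sum>l\<in>{1,2,3}. A j l * y l) = 0"
    using hom_sys[OF KF, of "{1,2::nat}" "{1,2,3::nat}" A] AK by auto
  define V where "V m = (if m = (0::nat) then y 1 else if m = 1 then y 2 else if m = 2 then y 3
      else if m = 3 then p * y 1 else if m = 4 then r * y 1 else r * y 2 - p * y 3)" for m
  have Vv: "V 0 = y 1" "V 1 = y 2" "V 2 = y 3" "V 3 = p * y 1" "V 4 = r * y 1" "V 5 = r * y 2 - p * y 3"
    unfolding V_def by simp_all
  have Wv: "W 0 = p * s - q * r" "W 1 = - r" "W 2 = p" "W 3 = - s" "W 4 = q" "W 5 = 1"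
    unfolding W_def by simp_all
  have WV: "(\<Sum>m<6. W m * V m) = 0" unfolding sum6 Vv Wv by algebra
  have CV12: "(\<Sum>m<6. C j m * V m) = 0" if "j \<in> {1,2}" for j
  proof -
    have "(\<Sum>m<6. C j m * V m) = (\<Sum>l\<in>{1,2,3}. A j l * y l)"
      unfolding sum6 sum123 Vv A_def by (simp add: algebra_simps)
    then show ?thesis using yeq that by auto
  qed
  have CV0: "(\<Sum>m<6. C 0 m * V m) = 0" using WV CV12[of 1] CV12[of 2] unfolding lincomb by simp
  have CV: "(\<Sum>m<6. C j m * V m) = 0" if "j < 3" for j
    using that CV0 CV12 by (cases "j = 0") (auto simp: eval_nat_numeral less_Suc_eq)
  have VK: "V m \<in> K" for m
    unfolding V_def using yK pK KF by (auto intro!: sf_mult sf_diff)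
  define VV where "VV m = (SOME abc. fst abc \<in> \<rat> \<and> fst (snd abc) \<in> \<rat> \<and> snd (snd abc) \<in> \<rat> \<and>
      V m = fst abc + fst (snd abc) * t + snd (snd abc) * t^2)" for m
  have VVp: "fst (VV m) \<in> \<rat> \<and> fst (snd (VV m)) \<in> \<rat> \<and> snd (snd (VV m)) \<in> \<rat> \<and>
      V m = fst (VV m) + fst (snd (VV m)) * t + snd (snd (VV m)) * t^2" for m
  proof -
    obtain a b c where "a \<in> \<rat>" "b \<in> \<rat>" "c \<in> \<rat>" "V m = a + b * t + c * t^2" using span[OF VK] by blast
    then have "\<exists>abc. fst abc \<in> \<rat> \<and> fst (snd abc) \<in> \<rat> \<and> snd (snd abc) \<in> \<rat> \<and>
      V m = fst abc + fst (snd abc) * t + snd (snd abc) * t^2" by (intro exI[of _ "(a, b, c)"]) simp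
    then show ?thesis unfolding VV_def by (rule someI_ex)
  qed
  define a where "a m = fst (VV m)" for m
  define b where "b m = fst (snd (VV m))" for m
  define c where "c m = snd (snd (VV m))" for m
  have abcq: "\<forall>m<6. a m \<in> \<rat>" "\<forall>m<6. b m \<in> \<rat>" "\<forall>m<6. c m \<in> \<rat>"
    unfolding a_def b_def c_def using VVp by auto
  have Vabc: "V m = a m + b m * t + c m * t^2" for m unfolding a_def b_def c_def using VVp by simp
  have Cabc: "(\<Sum>m<6. C j m * a m) = 0 \<and> (\<Sum>m<6. C j m * b m) = 0 \<and> (\<Sum>m<6. C j m * c m) = 0"
    if "j < 3" for j
  proof -
    have "(\<Sum>m<6. C j m * V m) = (\<Sum>m<6. C j m * a m + (C j m * b m) * t + (C j m * c m) * t^2)"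
      by (rule sum.cong[OF refl]) (simp add: Vabc algebra_simps)
    also have "\<dots> = (\<Sum>m<6. C j m * a m) + (\<Sum>m<6. C j m * b m) * t + (\<Sum>m<6. C j m * c m) * t^2"
      by (simp add: sum.distrib sum_distrib_right)
    finally have "(\<Sum>m<6. C j m * a m) + (\<Sum>m<6. C j m * b m) * t + (\<Sum>m<6. C j m * c m) * t^2 = 0"
      using CV[OF that] by simp
    moreover have "(\<Sum>m<6. C j m * a m) \<in> \<rat>" "(\<Sum>m<6. C j m * b m) \<in> \<rat>" "(\<Sum>m<6. C j m * c m) \<in> \<rat>"
      using abcq Cq by (auto intro!: rat_sum)
    ultimately show ?thesis using indep3_D[OF ind] by blast
  qed
  have PfV: "Pf V = 0" unfolding Pf_def Vv by algebra
  have PfZ: "Pf (\<lambda>m. a m + b m * t + c m * t^2) = 0" proof -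
    have "(\<lambda>m. a m + b m * t + c m * t^2) = V" by (rule ext) (simp add: Vabc)
    then show ?thesis using PfV by simp
  qed
  have nzV: "\<exists>m<6. a m + b m * t + c m * t^2 \<noteq> 0"
  proof -
    have "V 0 \<noteq> 0 \<or> V 1 \<noteq> 0 \<or> V 2 \<noteq> 0" using ynz unfolding Vv by auto
    then show ?thesis unfolding Vabc[symmetric] ex6 by blast
  qed
  obtain \<alpha> \<beta> \<gamma> where abg: "\<alpha> \<in> \<rat>" "\<beta> \<in> \<rat>" "\<gamma> \<in> \<rat>"
    and Pv: "Pf (\<lambda>m. \<alpha> * a m + \<beta> * b m + \<gamma> * c m) = 0"
    and nzv: "\<exists>m<6. \<alpha> * a m + \<beta> * b m + \<gamma> * c m \<noteq> 0"
    using springer[OF ind e abcq PfZ nzV] by blast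
  define v where "v m = \<alpha> * a m + \<beta> * b m + \<gamma> * c m" for m
  have vq: "\<forall>m<6. v m \<in> \<rat>" unfolding v_def using abg abcq by auto
  have Cv: "(\<Sum>m<6. C j m * v m) = 0" if "j < 3" for j
  proof -
    have "(\<Sum>m<6. C j m * v m) = \<alpha> * (\<Sum>m<6. C j m * a m) + \<beta> * (\<Sum>m<6. C j m * b m) + \<gamma> * (\<Sum>m<6. C j m * c m)"
      unfolding v_def by (simp add: sum.distrib sum_distrib_left algebra_simps)
    then show ?thesis using Cabc[OF that] by simp
  qed
  have Wv0: "(\<Sum>m<6. W m * v m) = 0" unfolding lincomb using Cv[of 0] Cv[of 1] Cv[of 2] by simp
  obtain x y where xq: "\<forall>i<4. x i \<in> \<rat>" and yq: "\<forall>i<4. y i \<in> \<rat>" and xy: "\<forall>m<6. pw x y m = v m"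
    using decomp[OF Pv[folded v_def] vq nzv[folded v_def]] by blast
  have nzxy: "\<exists>m<6. pw x y m \<noteq> 0" using nzv xy unfolding v_def by auto
  have "(p * x 0 + q * x 1 + x 2) * (r * y 0 + s * y 1 + y 3) - (r * x 0 + s * x 1 + x 3) * (p * y 0 + q * y 1 + y 2)
      = (\<Sum>m<6. W m * pw x y m)" unfolding sum6 Wv pw_vals by algebra
  also have "\<dots> = (\<Sum>m<6. W m * v m)" using xy by (intro sum.cong) auto
  finally have "(p * x 0 + q * x 1 + x 2) * (r * y 0 + s * y 1 + y 3) = (r * x 0 + s * x 1 + x 3) * (p * y 0 + q * y 1 + y 2)"
    using Wv0 by simp
  then have "\<not> is_simple_surface \<tau>"
    using final[of \<tau> x y] det xq yq nzxy unfolding p_def q_def r_def s_def by blast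
  then show False using assms(2) by simp
qed

end
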